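(* Let $\gamma:[0,1]\to\mathbb R^d$ be bounded and measurable, let $\alpha\in(0,1]$, $b\in L^1_tC^{\alpha,\mathrm{loc}}_x$, and consider the ODE $y_t=y_0+\int_0^tb_s(y_s)\mathrm ds+\gamma_t$. Suppose it admits a locally $\beta$-Hölder continuous semiflow $\Phi$ with $\beta(1+\alpha)>1$. Then for any $0\le S\le T\le1$ and $y\in\mathbb R^d$ there exists a unique solution $z:[S,T]\to\mathbb R^d$ of $z_t=y+\int_S^tb_r(z_r)\mathrm dr+\gamma_t-\gamma_S$, $t\in[S,T]$, and it is given by $z_t=\Phi_{S\to t}(y)$.
   Context: $C^{\alpha,\mathrm{loc}}_x$ is the space of functions $f$ on $\mathbb R^d$ with $fg\in C^\alpha_x$ for every smooth compactly supported $g$ (locally $\alpha$-Hölder functions for $\alpha<1$); $L^1_tC^{\alpha,\mathrm{loc}}_x=L^1([0,1];C^{\alpha,\mathrm{loc}}_x)$ (all local seminorms integrable). A semiflow is a jointly measurable $\Phi:\{0\le s\le t\le1\}\times\mathbb R^d\to\mathbb R^d$ with $\Phi_{s\to t}(x)=x+\int_s^tb_r(\Phi_{s\to r}(x))\mathrm dr+\gamma_t-\gamma_s$ for all $(s,x)$, $t\in[s,1]$, and $\Phi_{s\to t}(x)=\Phi_{r\to t}(\Phi_{s\to r}(x))$ for $s\le r\le t$. It is locally $\beta$-Hölder continuous if for every $K>0$ there is $N$ with $|\Phi_{s\to t}(x)-\Phi_{s\to t}(y)|\le N|x-y|^\beta$ for all $s\le t$ and $x,y\in B_K$. *)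

theory Defs
  imports "HOL-Analysis.Analysis"
begin

definition holder_norm_ball :: "real \<Rightarrow> real \<Rightarrow> ('a::euclidean_space \<Rightarrow> 'a) \<Rightarrow> ennreal" where
  "holder_norm_ball \<alpha> K f =
     (SUP x\<in>cball 0 K. ennreal (norm (f x))) +
     (SUP p\<in>{(x, y). x \<in> cball 0 K \<and> y \<in> cball 0 K \<and> x \<noteq> y}.
        ennreal (norm (f (fst p) - f (snd p)) / norm (fst p - snd p) powr \<alpha>))"

definition L1_Cloc :: "real \<Rightarrow> (real \<Rightarrow> 'a::euclidean_space \<Rightarrow> 'a) \<Rightarrow> bool" where
  "L1_Cloc \<alpha> b \<longleftrightarrow>
     (\<lambda>p. b (fst p) (snd p)) \<in> borel_measurable borel \<and>
     (\<forall>K>0. (\<integral>\<^sup>+ t. holder_norm_ball \<alpha> K (b t) * indicator {0..1} t \<partial>lborel) < \<infinity>)"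

definition is_solution ::
  "(real \<Rightarrow> 'a::euclidean_space \<Rightarrow> 'a) \<Rightarrow> (real \<Rightarrow> 'a) \<Rightarrow> real \<Rightarrow> real \<Rightarrow> 'a \<Rightarrow> (real \<Rightarrow> 'a) \<Rightarrow> bool" where
  "is_solution b \<gamma> S T y z \<longleftrightarrow>
     (\<forall>t\<in>{S..T}. set_integrable lborel {S..t} (\<lambda>r. b r (z r)) \<and>
        z t = y + (LINT r:{S..t}|lborel. b r (z r)) + \<gamma> t - \<gamma> S)"

text \<open>Semiflow Phi s t x = Phi_{s->t}(x).\<close>
definition semiflow ::
  "(real \<Rightarrow> 'a::euclidean_space \<Rightarrow> 'a) \<Rightarrow> (real \<Rightarrow> 'a) \<Rightarrow> (real \<Rightarrow> real \<Rightarrow> 'a \<Rightarrow> 'a) \<Rightarrow> bool" where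
  "semiflow b \<gamma> \<Phi> \<longleftrightarrow>
     (\<lambda>p. \<Phi> (fst p) (fst (snd p)) (snd (snd p)))
        \<in> borel_measurable (restrict_space borel {p. 0 \<le> fst p \<and> fst p \<le> fst (snd p) \<and> fst (snd p) \<le> 1}) \<and>
     (\<forall>s x. 0 \<le> s \<and> s \<le> 1 \<longrightarrow> is_solution b \<gamma> s 1 x (\<lambda>t. \<Phi> s t x)) \<and>
     (\<forall>s r t x. 0 \<le> s \<and> s \<le> r \<and> r \<le> t \<and> t \<le> 1 \<longrightarrow> \<Phi> s t x = \<Phi> r t (\<Phi> s r x))"

definition loc_holder_semiflow :: "real \<Rightarrow> (real \<Rightarrow> real \<Rightarrow> 'a::euclidean_space \<Rightarrow> 'a) \<Rightarrow> bool" where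
  "loc_holder_semiflow \<beta> \<Phi> \<longleftrightarrow>
     (\<forall>K>0. \<exists>N. \<forall>s t x y. 0 \<le> s \<and> s \<le> t \<and> t \<le> 1 \<and> x \<in> cball 0 K \<and> y \<in> cball 0 K \<longrightarrow>
        norm (\<Phi> s t x - \<Phi> s t y) \<le> N * norm (x - y) powr \<beta>)"

end

theory Submission
  imports Defs
begin


lemma lower_env:
  fixes f :: "'a \<Rightarrow> ennreal"
  shows "\<exists>G. G \<in> borel_measurable M \<and> (\<forall>x. G x \<le> f x) \<and> nn_integral M G = nn_integral M f"
proof -
  let ?A = "{g. simple_function M g \<and> g \<le> f}"
  have "(\<lambda>_. 0) \<in> ?A" by (auto simp: le_fun_def)
  then have ne: "?A \<noteq> {}" by blast
  obtain u :: "nat \<Rightarrow> ennreal" where u: "range u \<subseteq> integral\<^sup>S M ` ?A"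
    "Sup (integral\<^sup>S M ` ?A) = Sup (range u)"
    using ennreal_SUP_countable_SUP[OF ne, of "integral\<^sup>S M"] by blast
  have "\<forall>i. \<exists>g. g \<in> ?A \<and> u i = integral\<^sup>S M g" using u(1) by blast
  then obtain g where g: "\<And>i. g i \<in> ?A" "\<And>i. u i = integral\<^sup>S M (g i)" by metis
  define G where "G x = (SUP i. g i x)" for x
  have Gm: "G \<in> borel_measurable M" unfolding G_def
  proof (rule borel_measurable_SUP)
    fix i show "g i \<in> borel_measurable M" using g(1)[of i] by (auto intro: borel_measurable_simple_function)
  qed simp
  have Gf: "\<forall>x. G x \<le> f x" unfolding G_def using g(1) by (auto intro!: SUP_least simp: le_fun_def)
  have "nn_integral M G \<le> nn_integral M f" using Gf by (intro nn_integral_mono) auto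
  moreover have "nn_integral M f \<le> nn_integral M G"
  proof -
    have "nn_integral M f = Sup (range u)" unfolding nn_integral_def using u(2) by simp
    also have "\<dots> \<le> nn_integral M G"
    proof (rule SUP_least)
      fix i
      have "u i = nn_integral M (g i)" using g by (simp add: nn_integral_eq_simple_integral)
      also have "\<dots> \<le> nn_integral M G" unfolding G_def by (intro nn_integral_mono SUP_upper) auto
      finally show "u i \<le> nn_integral M G" .
    qed
    finally show ?thesis .
  qed
  ultimately show ?thesis using Gm Gf by (intro exI[of _ G]) auto
qed

lemma lower_sub:
  fixes f G h :: "'a \<Rightarrow> ennreal"
  assumes Gm: "G \<in> borel_measurable M" and Gf: "\<forall>x. G x \<le> f x"
    and eq: "nn_integral M G = nn_integral M f" and fin: "nn_integral M f < \<infinity>"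
    and A: "A \<in> sets M" and hm: "h \<in> borel_measurable M"
    and hf: "\<forall>x. h x \<le> f x * indicator A x"
  shows "nn_integral M h \<le> (\<integral>\<^sup>+x. G x * indicator A x \<partial>M)"
proof -
  have "(\<integral>\<^sup>+x. h x \<partial>M) + (\<integral>\<^sup>+x. G x * indicator (space M - A) x \<partial>M) = (\<integral>\<^sup>+x. h x + G x * indicator (space M - A) x \<partial>M)"
    using A Gm hm by (intro nn_integral_add[symmetric]) (auto intro!: borel_measurable_times_ennreal borel_measurable_indicator)
  also have "\<dots> \<le> nn_integral M f"
  proof (intro nn_integral_mono)
    fix x show "h x + G x * indicator (space M - A) x \<le> f x"
      using hf[rule_format, of x] Gf[rule_format, of x] sets.sets_into_space[OF A] by (cases "x \<in> A") (auto simp: indicator_def)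
  qed
  also have "\<dots> = nn_integral M G" using eq by simp
  also have "\<dots> = (\<integral>\<^sup>+x. G x * indicator A x + G x * indicator (space M - A) x \<partial>M)"
    using sets.sets_into_space[OF A] by (intro nn_integral_cong) (auto simp: indicator_def)
  also have "\<dots> = (\<integral>\<^sup>+x. G x * indicator A x \<partial>M) + (\<integral>\<^sup>+x. G x * indicator (space M - A) x \<partial>M)"
    using A Gm by (intro nn_integral_add) (auto intro!: borel_measurable_times_ennreal borel_measurable_indicator)
  finally have *: "(\<integral>\<^sup>+x. h x \<partial>M) + (\<integral>\<^sup>+x. G x * indicator (space M - A) x \<partial>M)
     \<le> (\<integral>\<^sup>+x. G x * indicator A x \<partial>M) + (\<integral>\<^sup>+x. G x * indicator (space M - A) x \<partial>M)" .
  have "(\<integral>\<^sup>+x. G x * indicator (space M - A) x \<partial>M) \<le> nn_integral M G"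
    by (intro nn_integral_mono) (auto simp: indicator_def)
  then have "(\<integral>\<^sup>+x. G x * indicator (space M - A) x \<partial>M) < \<infinity>" using eq fin by simp
  with * show ?thesis by (simp add: add.commute[of _ "(\<integral>\<^sup>+x. G x * indicator (space M - A) x \<partial>M)"] ennreal_add_left_cancel_le) (metis less_irrefl)
qed


lemma envelope_real:
  fixes f :: "real \<Rightarrow> ennreal"
  assumes fin: "nn_integral lborel f < \<infinity>"
  shows "\<exists>H. H \<in> borel_measurable borel \<and> (\<forall>x. 0 \<le> H x) \<and> integrable lborel H \<and>
   (\<forall>s t h. set_integrable lborel {s..t} h \<longrightarrow> (\<forall>x\<in>{s..t}. 0 \<le> h x \<and> ennreal (h x) \<le> f x) \<longrightarrow>
      (LINT x:{s..t}|lborel. h x) \<le> (LINT x:{s..t}|lborel. H x))"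
proof -
  obtain G where G: "G \<in> borel_measurable lborel" "\<forall>x. G x \<le> f x" "nn_integral lborel G = nn_integral lborel f"
    using lower_env by blast
  define H where "H x = enn2real (G x)" for x
  have Hm: "H \<in> borel_measurable borel" unfolding H_def using G(1) by simp
  have H0: "\<forall>x. 0 \<le> H x" unfolding H_def by simp
  have "(\<integral>\<^sup>+x. ennreal (H x) \<partial>lborel) \<le> nn_integral lborel G"
    unfolding H_def by (intro nn_integral_mono) (simp add: ennreal_enn2real_if)
  then have "(\<integral>\<^sup>+x. ennreal (H x) \<partial>lborel) < \<infinity>" using G(3) fin by simp
  then have Hi: "integrable lborel H" using Hm H0 by (intro integrableI_nonneg) auto
  have AEfin: "AE x in lborel. G x \<noteq> \<infinity>" using G fin by (intro nn_integral_PInf_AE) auto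
  have main: "(LINT x:{s..t}|lborel. h x) \<le> (LINT x:{s..t}|lborel. H x)"
    if hi: "set_integrable lborel {s..t} h" and hb: "\<forall>x\<in>{s..t}. 0 \<le> h x \<and> ennreal (h x) \<le> f x" for s t h
  proof -
    have hi': "integrable lborel (\<lambda>x. indicator {s..t} x *\<^sub>R h x)" using hi by (simp add: set_integrable_def)
    have "ennreal (LINT x:{s..t}|lborel. h x) = (\<integral>\<^sup>+x. ennreal (indicator {s..t} x *\<^sub>R h x) \<partial>lborel)"
      unfolding set_lebesgue_integral_def using hi' hb
      by (intro nn_integral_eq_integral[symmetric]) (auto simp: indicator_def)
    also have "\<dots> \<le> (\<integral>\<^sup>+x. G x * indicator {s..t} x \<partial>lborel)"
    proof (rule lower_sub[OF G(1) G(2) G(3) fin])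
      show "{s..t} \<in> sets lborel" by simp
      show "(\<lambda>x. ennreal (indicator {s..t} x *\<^sub>R h x)) \<in> borel_measurable lborel"
        using borel_measurable_integrable[OF hi'] by simp
      show "\<forall>x. ennreal (indicator {s..t} x *\<^sub>R h x) \<le> f x * indicator {s..t} x"
        using hb by (auto simp: indicator_def)
    qed
    also have "\<dots> = (\<integral>\<^sup>+x. ennreal (indicator {s..t} x *\<^sub>R H x) \<partial>lborel)"
      using AEfin by (intro nn_integral_cong_AE) (auto simp: H_def indicator_def less_top)
    also have "\<dots> = ennreal (LINT x:{s..t}|lborel. H x)"
      unfolding set_lebesgue_integral_def using integrable_mult_indicator[OF _ Hi, of "{s..t}"] H0
      by (intro nn_integral_eq_integral) auto
    finally show ?thesis using H0 
      by (subst (asm) ennreal_le_iff) (auto simp: set_lebesgue_integral_def intro!: integral_nonneg_AE)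
  qed
  show ?thesis using Hm H0 Hi main by blast
qed


lemma powr_est:
  fixes W \<eta> \<alpha> \<beta> :: real
  assumes "0 \<le> W" "W \<le> \<eta>" "0 < \<alpha>" "\<beta> * (1 + \<alpha>) > 1"
  shows "((2*W) powr \<alpha> * W) powr \<beta> \<le> (2 powr \<alpha>) powr \<beta> * \<eta> powr (\<beta>*(1+\<alpha>) - 1) * W"
proof (cases "W = 0")
  case True then show ?thesis by simp
next
  case False
  then have W: "0 < W" using assms by simp
  have b: "0 < \<beta>" using assms by (smt (verit) mult_nonpos_nonneg)
  have "((2*W) powr \<alpha> * W) powr \<beta> = (2 powr \<alpha> * W powr (\<alpha> + 1)) powr \<beta>"
    using W by (simp add: powr_mult powr_add)
  also have "\<dots> = (2 powr \<alpha>) powr \<beta> * W powr (\<beta>*(1+\<alpha>))"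
    using W by (simp add: powr_mult powr_powr mult.commute add.commute)
  also have "W powr (\<beta>*(1+\<alpha>)) = W powr (\<beta>*(1+\<alpha>) - 1) * W"
    using W by (simp add: powr_diff)
  also have "\<dots> \<le> \<eta> powr (\<beta>*(1+\<alpha>) - 1) * W"
    using W assms by (intro mult_right_mono powr_mono2) auto
  finally show ?thesis by (simp add: mult.assoc mult_left_mono)
qed

lemma hk_mono_set:
  fixes f :: "real \<Rightarrow> real"
  assumes "f integrable_on {a..b}" "\<forall>x\<in>{a..b}. 0 \<le> f x" "a \<le> c" "c \<le> b"
  shows "integral {a..c} f \<le> integral {a..b} f"
proof -
  have "integral {a..c} f + integral {c..b} f = integral {a..b} f"
    using assms by (intro Henstock_Kurzweil_Integration.integral_combine) auto
  moreover have "0 \<le> integral {c..b} f"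
    using assms by (intro integral_nonneg integrable_on_subinterval[OF assms(1)]) auto
  ultimately show ?thesis by simp
qed

lemma hk_diff:
  fixes f :: "real \<Rightarrow> 'a::banach"
  assumes "f integrable_on {a..b}" "a \<le> c" "c \<le> b"
  shows "integral {c..b} f = integral {a..b} f - integral {a..c} f"
  using Henstock_Kurzweil_Integration.integral_combine[OF assms(2,3,1)] by (simp add: algebra_simps)



theorem lemma4p5:
  fixes \<gamma> :: "real \<Rightarrow> 'a::euclidean_space"
    and b :: "real \<Rightarrow> 'a \<Rightarrow> 'a"
    and \<Phi> :: "real \<Rightarrow> real \<Rightarrow> 'a \<Rightarrow> 'a"
    and \<alpha> \<beta> :: real
  assumes "\<gamma> \<in> borel_measurable (restrict_space borel {0..1})"
    and "bounded (\<gamma> ` {0..1})"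
    and "0 < \<alpha>" "\<alpha> \<le> 1"
    and "L1_Cloc \<alpha> b"
    and "semiflow b \<gamma> \<Phi>"
    and "loc_holder_semiflow \<beta> \<Phi>"
    and "\<beta> * (1 + \<alpha>) > 1"
    and "0 \<le> S" "S \<le> T" "T \<le> 1"
  shows "is_solution b \<gamma> S T y (\<lambda>t. \<Phi> S t y) \<and>
         (\<forall>z. is_solution b \<gamma> S T y z \<longrightarrow> (\<forall>t\<in>{S..T}. z t = \<Phi> S t y))"
proof -
  note ST = assms(9,10,11)
  have sol: "\<And>s x. 0 \<le> s \<Longrightarrow> s \<le> 1 \<Longrightarrow> is_solution b \<gamma> s 1 x (\<lambda>t. \<Phi> s t x)"
    using assms(6) unfolding semiflow_def by blast
  have comp: "\<And>s r t x. 0 \<le> s \<Longrightarrow> s \<le> r \<Longrightarrow> r \<le> t \<Longrightarrow> t \<le> 1 \<Longrightarrow> \<Phi> s t x = \<Phi> r t (\<Phi> s r x)"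
    using assms(6) unfolding semiflow_def by blast
  have phi_int: "set_integrable lborel {s..t} (\<lambda>r. b r (\<Phi> s r x))"
    if "0 \<le> s" "s \<le> t" "t \<le> 1" for s t x
    using sol[of s x] that unfolding is_solution_def by auto
  have phi_eq: "\<Phi> s t x = x + integral {s..t} (\<lambda>r. b r (\<Phi> s r x)) + \<gamma> t - \<gamma> s"
    if "0 \<le> s" "s \<le> t" "t \<le> 1" for s t x
  proof -
    have "\<Phi> s t x = x + (LINT r:{s..t}|lborel. b r (\<Phi> s r x)) + \<gamma> t - \<gamma> s"
      using sol[of s x] that unfolding is_solution_def by auto
    then show ?thesis using set_borel_integral_eq_integral(2)[OF phi_int[OF that, of x]] by simp
  qed
  have phi_id: "\<Phi> s s x = x" if "0 \<le> s" "s \<le> 1" for s x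
    using phi_eq[of s s x] that by simp
  have exist: "is_solution b \<gamma> S T y (\<lambda>t. \<Phi> S t y)"
    using sol[of S y] ST unfolding is_solution_def by auto
  obtain B where B: "\<And>t. t \<in> {0..1} \<Longrightarrow> norm (\<gamma> t) \<le> B"
    using assms(2) unfolding bounded_iff by blast
  have bpos: "0 < \<beta>" using assms(3,8) by (smt (verit) mult_nonpos_nonneg)
  have uniq: "z t0 = \<Phi> S t0 y" if zs: "is_solution b \<gamma> S T y z" and t0: "t0 \<in> {S..T}" for z t0
  proof -
    have z_int: "set_integrable lborel {S..t} (\<lambda>r. b r (z r))" if "S \<le> t" "t \<le> T" for t
      using zs that unfolding is_solution_def by auto
    have z_eq: "z t = y + integral {S..t} (\<lambda>r. b r (z r)) + \<gamma> t - \<gamma> S" if "S \<le> t" "t \<le> T" for t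
    proof -
      have "z t = y + (LINT r:{S..t}|lborel. b r (z r)) + \<gamma> t - \<gamma> S"
        using zs that unfolding is_solution_def by auto
      then show ?thesis using set_borel_integral_eq_integral(2)[OF z_int[OF that]] by simp
    qed
    have zS: "z S = y" using z_eq[of S] ST by simp
    have zint_on: "(\<lambda>r. b r (z r)) integrable_on {s..t}" if "S \<le> s" "s \<le> t" "t \<le> T" for s t
      using integrable_on_subinterval[OF set_borel_integral_eq_integral(1)[OF z_int[of t]], of s t] that
      by auto
    have znorm_on: "(\<lambda>r. norm (b r (z r))) integrable_on {S..T}"
      using set_borel_integral_eq_integral(1)[OF set_integrable_norm[OF z_int[of T]]] ST by simp
    define Kz where "Kz = norm y + integral {S..T} (\<lambda>r. norm (b r (z r))) + 2*B"
    have zK: "norm (z t) \<le> Kz" if "S \<le> t" "t \<le> T" for t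
    proof -
      have "norm (integral {S..t} (\<lambda>r. b r (z r))) \<le> integral {S..t} (\<lambda>r. norm (b r (z r)))"
        using zint_on[of S t] that integrable_on_subinterval[OF znorm_on, of S t]
        by (intro integral_norm_bound_integral) auto
      also have "\<dots> \<le> integral {S..T} (\<lambda>r. norm (b r (z r)))"
        using znorm_on that by (intro hk_mono_set) auto
      finally have 1: "norm (integral {S..t} (\<lambda>r. b r (z r))) \<le> integral {S..T} (\<lambda>r. norm (b r (z r)))" .
      have 2: "norm (\<gamma> t) \<le> B" "norm (\<gamma> S) \<le> B" using B that ST by auto
      show ?thesis unfolding z_eq[OF that] Kz_def using 1 2 norm_triangle_ineq4 norm_triangle_ineq
        by (smt (verit, ccfv_threshold) norm_triangle_ineq4 norm_triangle_ineq)
    qed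
    have pnorm_on: "(\<lambda>r. norm (b r (\<Phi> 0 r 0))) integrable_on {0..1}"
      using set_borel_integral_eq_integral(1)[OF set_integrable_norm[OF phi_int[of 0 1 0]]] by simp
    define K0 where "K0 = integral {0..1} (\<lambda>r. norm (b r (\<Phi> 0 r 0))) + 2*B"
    have pK: "norm (\<Phi> 0 t 0) \<le> K0" if "0 \<le> t" "t \<le> 1" for t
    proof -
      have "norm (integral {0..t} (\<lambda>r. b r (\<Phi> 0 r 0))) \<le> integral {0..t} (\<lambda>r. norm (b r (\<Phi> 0 r 0)))"
        using set_borel_integral_eq_integral(1)[OF phi_int[of 0 t 0]] that integrable_on_subinterval[OF pnorm_on, of 0 t]
        by (intro integral_norm_bound_integral) auto
      also have "\<dots> \<le> integral {0..1} (\<lambda>r. norm (b r (\<Phi> 0 r 0)))"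
        using pnorm_on that by (intro hk_mono_set) auto
      finally have 1: "norm (integral {0..t} (\<lambda>r. b r (\<Phi> 0 r 0))) \<le> integral {0..1} (\<lambda>r. norm (b r (\<Phi> 0 r 0)))" .
      have 2: "norm (\<gamma> t) \<le> B" "norm (\<gamma> 0) \<le> B" using B that by auto
      show ?thesis unfolding phi_eq[OF order_refl that] K0_def using 1 2
        by (smt (verit, ccfv_threshold) norm_triangle_ineq4 norm_triangle_ineq norm_zero)
    qed
    define K where "K = max Kz K0 + 1"
    have Kpos: "K > 0" unfolding K_def using zK[of S] pK[of 0] ST by (smt (verit) norm_ge_zero)
    obtain N where N: "\<And>s t x x'. 0 \<le> s \<Longrightarrow> s \<le> t \<Longrightarrow> t \<le> 1 \<Longrightarrow> x \<in> cball 0 K \<Longrightarrow> x' \<in> cball 0 K \<Longrightarrow>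
        norm (\<Phi> s t x - \<Phi> s t x') \<le> N * norm (x - x') powr \<beta>"
      using assms(7) Kpos unfolding loc_holder_semiflow_def by meson
    define K' where "K' = K0 + \<bar>N\<bar> * (2*K) powr \<beta> + Kz + 1"
    have K'pos: "K' > 0" unfolding K'_def using zK[of S] pK[of 0] ST
      by (smt (verit) norm_ge_zero powr_ge_zero zero_le_mult_iff abs_ge_zero)
    have zK': "norm (z t) \<le> K'" if "S \<le> t" "t \<le> T" for t
      using zK[OF that] pK[of 0] unfolding K'_def
      by (smt (verit) norm_ge_zero powr_ge_zero zero_le_mult_iff abs_ge_zero)
    have pK': "norm (\<Phi> s r (z s)) \<le> K'" if "S \<le> s" "s \<le> r" "r \<le> T" for s r
    proof -
      have e: "\<Phi> 0 r 0 = \<Phi> s r (\<Phi> 0 s 0)" using comp[of 0 s r 0] that ST by simp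
      have zs: "z s \<in> cball 0 K" using zK[of s] that K_def by auto
      have ps: "\<Phi> 0 s 0 \<in> cball 0 K" using pK[of s] that ST K_def by auto
      have "norm (\<Phi> s r (z s) - \<Phi> 0 r 0) \<le> N * norm (z s - \<Phi> 0 s 0) powr \<beta>"
        unfolding e using N[OF _ _ _ zs ps] that ST by auto
      also have "\<dots> \<le> \<bar>N\<bar> * norm (z s - \<Phi> 0 s 0) powr \<beta>"
        by (intro mult_right_mono) auto
      also have "\<dots> \<le> \<bar>N\<bar> * (2*K) powr \<beta>"
      proof (intro mult_left_mono powr_mono2)
        show "norm (z s - \<Phi> 0 s 0) \<le> 2*K" using zs ps
          by (smt (verit) mem_cball_0 norm_triangle_ineq4)
      qed (use bpos in auto)
      finally have "norm (\<Phi> s r (z s) - \<Phi> 0 r 0) \<le> \<bar>N\<bar> * (2*K) powr \<beta>" .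
      moreover have "norm (\<Phi> 0 r 0) \<le> K0" using pK[of r] that ST by auto
      ultimately show ?thesis unfolding K'_def using zK[of S] ST
        by (smt (verit) norm_ge_zero norm_triangle_ineq2)
    qed
    define g where "g r = holder_norm_ball \<alpha> K' (b r)" for r
    have gfin: "(\<integral>\<^sup>+r. g r * indicator {0..1} r \<partial>lborel) < \<infinity>"
      using assms(5) K'pos unfolding L1_Cloc_def g_def by blast
    obtain H where H: "H \<in> borel_measurable borel" "\<forall>x. 0 \<le> H x" "integrable lborel H"
      "\<forall>s t h. set_integrable lborel {s..t} h \<longrightarrow> (\<forall>x\<in>{s..t}. 0 \<le> h x \<and> ennreal (h x) \<le> g x * indicator {0..1} x) \<longrightarrow>
      (LINT x:{s..t}|lborel. h x) \<le> (LINT x:{s..t}|lborel. H x)"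
      using envelope_real[OF gfin] by blast
    have Hset: "set_integrable lborel A H" if "A \<in> sets lborel" for A
      unfolding set_integrable_def using integrable_mult_indicator[OF that H(3)] by simp
    have Hon: "H integrable_on {s..t}" for s t
      using set_borel_integral_eq_integral(1)[OF Hset] by simp
    have g_sup: "ennreal (norm (b r x)) \<le> g r" if "x \<in> cball 0 K'" for r x
    proof -
      have "ennreal (norm (b r x)) \<le> (SUP x\<in>cball 0 K'. ennreal (norm (b r x)))"
        using that by (rule SUP_upper)
      also have "\<dots> \<le> g r" unfolding g_def holder_norm_ball_def by (rule add_increasing2) auto
      finally show ?thesis .
    qed
    have g_hol: "ennreal (norm (b r x - b r x')) \<le> g r * ennreal (norm (x - x') powr \<alpha>)"
      if "x \<in> cball 0 K'" "x' \<in> cball 0 K'" for r x x'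
    proof (cases "x = x'")
      case True then show ?thesis by simp
    next
      case False
      let ?q = "norm (b r x - b r x') / norm (x - x') powr \<alpha>"
      have "ennreal ?q \<le> (SUP p\<in>{(x, y). x \<in> cball 0 K' \<and> y \<in> cball 0 K' \<and> x \<noteq> y}.
        ennreal (norm (b r (fst p) - b r (snd p)) / norm (fst p - snd p) powr \<alpha>))"
        using that False by (intro SUP_upper2[of "(x, x')"]) auto
      also have "\<dots> \<le> g r" unfolding g_def holder_norm_ball_def by (rule add_increasing) auto
      finally have q: "ennreal ?q \<le> g r" .
      have "norm (b r x - b r x') = ?q * norm (x - x') powr \<alpha>" using False by simp
      then have "ennreal (norm (b r x - b r x')) = ennreal ?q * ennreal (norm (x - x') powr \<alpha>)"
        by (metis ennreal_mult norm_ge_zero powr_ge_zero divide_nonneg_nonneg)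
      also have "\<dots> \<le> g r * ennreal (norm (x - x') powr \<alpha>)" using q by (intro mult_right_mono) auto
      finally show ?thesis .
    qed
    have KEY: "integral {s..t} k \<le> c * integral {s..t} H"
      if "0 \<le> s" "s \<le> t" "t \<le> 1" "0 < c" "set_integrable lborel {s..t} k"
        "\<forall>x\<in>{s..t}. 0 \<le> k x \<and> ennreal (k x) \<le> ennreal c * g x" for s t c k
    proof -
      have ki: "set_integrable lborel {s..t} (\<lambda>x. k x / c)"
        using that(5) by (rule set_integrable_divide)
      have "\<forall>x\<in>{s..t}. 0 \<le> k x / c \<and> ennreal (k x / c) \<le> g x * indicator {0..1} x"
      proof
        fix x assume x: "x \<in> {s..t}"
        then have x1: "x \<in> {0..1}" using that by auto
        have k0: "0 \<le> k x" using that(6) x by auto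
        have "ennreal (k x / c) \<le> g x"
        proof (cases "g x = \<infinity>")
          case False
          then obtain v where v: "g x = ennreal v" "0 \<le> v" by (cases "g x") auto
          have "ennreal (k x) \<le> ennreal c * g x" using that(6) x by blast
          then have "ennreal (k x) \<le> ennreal (c * v)" using v that(4) by (simp add: ennreal_mult)
          then have "k x \<le> c * v" using that(4) v by (simp add: ennreal_le_iff2) (smt (verit) mult_nonneg_nonneg)
          then have "k x / c \<le> v" using that(4) by (simp add: divide_le_eq mult.commute)
          then show ?thesis using v by simp
        qed simp
        then show "0 \<le> k x / c \<and> ennreal (k x / c) \<le> g x * indicator {0..1} x"
          using x1 k0 that(4) by simp
      qed
      then have "(LINT x:{s..t}|lborel. k x / c) \<le> (LINT x:{s..t}|lborel. H x)"
        using H(4) ki by blast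
      then have "integral {s..t} k / c \<le> integral {s..t} H"
        using set_borel_integral_eq_integral(2)[OF that(5)] set_borel_integral_eq_integral(2)[OF Hset[of "{s..t}"]] that(4) by simp
      then show ?thesis using that(4) by (simp add: divide_le_eq mult.commute)
    qed
    define \<Psi> where "\<Psi> t = integral {0..t} H" for t
    have Psi_diff: "integral {s..t} H = \<Psi> t - \<Psi> s" if "0 \<le> s" "s \<le> t" for s t
      unfolding \<Psi>_def using hk_diff[OF Hon that] .
    have Psi_mono: "\<Psi> s \<le> \<Psi> t" if "0 \<le> s" "s \<le> t" for s t
      using Psi_diff[OF that] integral_nonneg[OF Hon, of s t] H(2) by fastforce
    have Psi_cont: "continuous_on {0..1} \<Psi>"
      unfolding \<Psi>_def by (rule indefinite_integral_continuous_1[OF Hon])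
    have Dbound: "norm (z t - \<Phi> s t (z s)) \<le> (2*(\<Psi> t - \<Psi> s)) powr \<alpha> * (\<Psi> t - \<Psi> s)"
      if st: "S \<le> s" "s \<le> t" "t \<le> T" for s t
    proof -
      define bz where "bz r = b r (z r)" for r
      define bp where "bp r = b r (\<Phi> s r (z s))" for r
      define k where "k r = norm (bz r - bp r)" for r
      have s0: "0 \<le> s" and t1: "t \<le> 1" using st ST by auto
      have kint: "set_integrable lborel {s..r} k" if "s \<le> r" "r \<le> t" for r
      proof -
        have "set_integrable lborel {s..r} bz" unfolding bz_def
          using set_integrable_subset[OF z_int[of r], of "{s..r}"] that st by auto
        moreover have "set_integrable lborel {s..r} bp" unfolding bp_def
          using phi_int[of s r "z s"] that st ST by auto
        ultimately have "set_integrable lborel {s..r} (\<lambda>u. bz u - bp u)"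
          unfolding set_integrable_def by (simp add: scaleR_diff_right Bochner_Integration.integrable_diff)
        then show ?thesis unfolding k_def by (rule set_integrable_norm)
      qed
      have diff_eq: "norm (z r - \<Phi> s r (z s)) \<le> integral {s..r} k" if "s \<le> r" "r \<le> t" for r
      proof -
        have bzon: "bz integrable_on {s..r}" unfolding bz_def using zint_on[of s r] that st by auto
        have bpon: "bp integrable_on {s..r}" unfolding bp_def
          using set_borel_integral_eq_integral(1)[OF phi_int[of s r "z s"]] that st ST by auto
        have "integral {S..r} bz = integral {S..s} bz + integral {s..r} bz"
          using zint_on[of S r] that st unfolding bz_def
          by (intro Henstock_Kurzweil_Integration.integral_combine[symmetric]) auto
        note e1 = z_eq[of r, folded bz_def]
        note e2 = z_eq[of s, folded bz_def]
        note e3 = phi_eq[of s r "z s", folded bp_def]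
        have d1: "z r - z s = integral {s..r} bz + \<gamma> r - \<gamma> s"
        proof -
          have E1: "z r = y + (integral {S..s} bz + integral {s..r} bz) + \<gamma> r - \<gamma> S"
            using e1 that st \<open>integral {S..r} bz = _\<close> by simp
          have E2: "z s = y + integral {S..s} bz + \<gamma> s - \<gamma> S" using e2 that st by simp
          show ?thesis unfolding E1 E2 by (simp add: algebra_simps)
        qed
        have d2: "\<Phi> s r (z s) - z s = integral {s..r} bp + \<gamma> r - \<gamma> s"
          using that st ST e3 by (simp add: algebra_simps)
        have "z r - \<Phi> s r (z s) = (z r - z s) - (\<Phi> s r (z s) - z s)" by simp
        also have "\<dots> = integral {s..r} bz - integral {s..r} bp" unfolding d1 d2 by simp
        finally have "z r - \<Phi> s r (z s) = integral {s..r} bz - integral {s..r} bp" .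
        also have "\<dots> = integral {s..r} (\<lambda>u. bz u - bp u)"
          using bzon bpon by (simp add: integral_diff)
        finally have "norm (z r - \<Phi> s r (z s)) = norm (integral {s..r} (\<lambda>u. bz u - bp u))" by simp
        also have "\<dots> \<le> integral {s..r} k"
          using bzon bpon set_borel_integral_eq_integral(1)[OF kint[OF that]] unfolding k_def
          by (intro integral_norm_bound_integral) (auto intro: integrable_diff)
        finally show ?thesis .
      qed
      have inball: "z r \<in> cball 0 K'" "\<Phi> s r (z s) \<in> cball 0 K'" if "s \<le> r" "r \<le> t" for r
        using zK'[of r] pK'[of s r] that st by auto
      have D1: "norm (z r - \<Phi> s r (z s)) \<le> 2 * (\<Psi> t - \<Psi> s)" if "s \<le> r" "r \<le> t" for r
      proof -
        have "integral {s..r} k \<le> 2 * integral {s..r} H"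
        proof (rule KEY)
          show "\<forall>x\<in>{s..r}. 0 \<le> k x \<and> ennreal (k x) \<le> ennreal 2 * g x"
          proof
            fix x assume x: "x \<in> {s..r}"
            have "ennreal (k x) \<le> ennreal (norm (bz x) + norm (bp x))"
              unfolding k_def by (intro ennreal_leI norm_triangle_ineq4)
            also have "\<dots> = ennreal (norm (bz x)) + ennreal (norm (bp x))" by (simp add: ennreal_plus)
            also have "\<dots> \<le> g x + g x" unfolding bz_def bp_def
              using inball[of x] x that by (intro add_mono g_sup) auto
            also have "\<dots> = ennreal 2 * g x" by (simp add: mult_2)
            finally show "0 \<le> k x \<and> ennreal (k x) \<le> ennreal 2 * g x" unfolding k_def by simp
          qed
        qed (use kint[OF that] that st ST in auto)
        also have "\<dots> = 2 * (\<Psi> r - \<Psi> s)" using Psi_diff[of s r] that s0 by simp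
        also have "\<dots> \<le> 2 * (\<Psi> t - \<Psi> s)" using Psi_mono[of r t] that s0 by simp
        finally show ?thesis using diff_eq[OF that] by simp
      qed
      show ?thesis
      proof (cases "\<Psi> t - \<Psi> s = 0")
        case True then show ?thesis using D1[of t] st by simp
      next
        case False
        then have Wpos: "0 < \<Psi> t - \<Psi> s" using Psi_mono[of s t] s0 st by simp
        let ?c = "(2*(\<Psi> t - \<Psi> s)) powr \<alpha>"
        have "integral {s..t} k \<le> ?c * integral {s..t} H"
        proof (rule KEY)
          show "\<forall>x\<in>{s..t}. 0 \<le> k x \<and> ennreal (k x) \<le> ennreal ?c * g x"
          proof
            fix x assume x: "x \<in> {s..t}"
            have "ennreal (k x) \<le> g x * ennreal (norm (z x - \<Phi> s x (z s)) powr \<alpha>)"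
              unfolding k_def bz_def bp_def using inball[of x] x by (intro g_hol) auto
            also have "\<dots> \<le> g x * ennreal ?c"
              using D1[of x] x assms(3) by (intro mult_left_mono ennreal_leI powr_mono2) auto
            finally show "0 \<le> k x \<and> ennreal (k x) \<le> ennreal ?c * g x" unfolding k_def by (simp add: mult.commute)
          qed
        qed (use kint[of t] Wpos st ST in auto)
        then show ?thesis using diff_eq[of t] Psi_diff[of s t] s0 st by simp
      qed
    qed
    obtain N' where N': "\<And>s t x x'. 0 \<le> s \<Longrightarrow> s \<le> t \<Longrightarrow> t \<le> 1 \<Longrightarrow> x \<in> cball 0 K' \<Longrightarrow> x' \<in> cball 0 K' \<Longrightarrow>
        norm (\<Phi> s t x - \<Phi> s t x') \<le> N' * norm (x - x') powr \<beta>"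
      using assms(7) K'pos unfolding loc_holder_semiflow_def by meson
    define p where "p = \<beta> * (1 + \<alpha>)"
    define C where "C = \<bar>N'\<bar> * (2 powr \<alpha>) powr \<beta>"
    have C0: "0 \<le> C" unfolding C_def by simp
    have t0': "S \<le> t0" "t0 \<le> T" using t0 by auto
    define F where "F t = \<Phi> t t0 (z t)" for t
    have F_est: "norm (F t - F s) \<le> C * \<eta> powr (p - 1) * (\<Psi> t - \<Psi> s)"
      if "S \<le> s" "s \<le> t" "t \<le> t0" "\<Psi> t - \<Psi> s \<le> \<eta>" for s t \<eta>
    proof -
      have "F s = \<Phi> t t0 (\<Phi> s t (z s))" unfolding F_def using comp[of s t t0 "z s"] that ST t0' by simp
      then have "norm (F t - F s) = norm (\<Phi> t t0 (z t) - \<Phi> t t0 (\<Phi> s t (z s)))" unfolding F_def by simp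
      also have "\<dots> \<le> N' * norm (z t - \<Phi> s t (z s)) powr \<beta>"
        using that ST t0' zK'[of t] pK'[of s t] by (intro N') auto
      also have "\<dots> \<le> \<bar>N'\<bar> * norm (z t - \<Phi> s t (z s)) powr \<beta>" by (intro mult_right_mono) auto
      also have "\<dots> \<le> \<bar>N'\<bar> * ((2*(\<Psi> t - \<Psi> s)) powr \<alpha> * (\<Psi> t - \<Psi> s)) powr \<beta>"
        using Dbound[of s t] that t0' bpos by (intro mult_left_mono powr_mono2) auto
      also have "\<dots> \<le> \<bar>N'\<bar> * ((2 powr \<alpha>) powr \<beta> * \<eta> powr (p - 1) * (\<Psi> t - \<Psi> s))"
        unfolding p_def using Psi_mono[of s t] that ST assms(3,8) by (intro mult_left_mono powr_est) auto
      finally show ?thesis unfolding C_def by (simp add: mult.assoc)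
    qed
    define M where "M = \<Psi> t0 - \<Psi> S"
    have M0: "0 \<le> M" unfolding M_def using Psi_mono[of S t0] ST t0' by simp
    have bound: "norm (F t0 - F S) \<le> C * \<eta> powr (p - 1) * M" if eta: "0 < \<eta>" for \<eta>
    proof -
      have "uniformly_continuous_on {0..1} \<Psi>" using Psi_cont compact_uniformly_continuous by blast
      then obtain d where d: "d > 0" "\<And>x x'. x \<in> {0..1} \<Longrightarrow> x' \<in> {0..1} \<Longrightarrow> dist x' x < d \<Longrightarrow> dist (\<Psi> x') (\<Psi> x) < \<eta>"
        unfolding uniformly_continuous_on_def using eta by metis
      obtain n :: nat where n: "(t0 - S) / d < real n" using reals_Archimedean2 by blast
      have "0 \<le> (t0 - S) / d" using t0' d(1) by simp
      then have npos: "0 < n" using n by (cases n) auto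
      define tp where "tp i = S + real i * (t0 - S) / real n" for i
      have tp0: "tp 0 = S" and tpn: "tp n = t0" using npos by (auto simp: tp_def)
      have hstep: "(t0 - S) / real n < d" using n npos d(1) by (simp add: divide_less_eq mult.commute pos_divide_less_eq)
      have tp_suc: "tp (Suc i) = tp i + (t0 - S) / real n" for i by (simp add: tp_def add_divide_distrib distrib_right)
      have tp_range: "S \<le> tp i \<and> tp i \<le> t0" if "i \<le> n" for i
      proof -
        have "real i * (t0 - S) / real n \<le> real n * (t0 - S) / real n"
          using that t0' by (intro divide_right_mono mult_right_mono) auto
        then show ?thesis using npos t0' by (simp add: tp_def)
      qed
      have each: "norm (F (tp (Suc i)) - F (tp i)) \<le> C * \<eta> powr (p - 1) * (\<Psi> (tp (Suc i)) - \<Psi> (tp i))"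
        if "i < n" for i
      proof (rule F_est)
        have r1: "S \<le> tp i" "tp i \<le> t0" using tp_range[of i] that by auto
        have r2: "S \<le> tp (Suc i)" "tp (Suc i) \<le> t0" using tp_range[of "Suc i"] that by auto
        show "S \<le> tp i" "tp (Suc i) \<le> t0" using r1 r2 by auto
        show le: "tp i \<le> tp (Suc i)" using tp_suc[of i] npos t0' by simp
        have "dist (tp (Suc i)) (tp i) < d" using tp_suc[of i] hstep npos t0' by (simp add: dist_real_def)
        then have "dist (\<Psi> (tp (Suc i))) (\<Psi> (tp i)) < \<eta>" using d(2) r1 r2 ST t0' by auto
        then show "\<Psi> (tp (Suc i)) - \<Psi> (tp i) \<le> \<eta>" by (simp add: dist_real_def)
      qed
      have "F t0 - F S = (\<Sum>i<n. F (tp (Suc i)) - F (tp i))"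
        using sum_lessThan_telescope[of "\<lambda>i. F (tp i)" n] tp0 tpn by simp
      then have "norm (F t0 - F S) \<le> (\<Sum>i<n. norm (F (tp (Suc i)) - F (tp i)))"
        by (simp add: norm_sum)
      also have "\<dots> \<le> (\<Sum>i<n. C * \<eta> powr (p - 1) * (\<Psi> (tp (Suc i)) - \<Psi> (tp i)))"
        using each by (intro sum_mono) auto
      also have "\<dots> = C * \<eta> powr (p - 1) * (\<Sum>i<n. \<Psi> (tp (Suc i)) - \<Psi> (tp i))"
        by (simp add: sum_distrib_left)
      also have "(\<Sum>i<n. \<Psi> (tp (Suc i)) - \<Psi> (tp i)) = M"
        using sum_lessThan_telescope[of "\<lambda>i. \<Psi> (tp i)" n] tp0 tpn unfolding M_def by simp
      finally show ?thesis .
    qed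
    have "F t0 = F S"
    proof (rule ccontr)
      assume ne: "F t0 \<noteq> F S"
      define d0 where "d0 = norm (F t0 - F S)"
      have d0: "0 < d0" unfolding d0_def using ne by simp
      have p1: "p - 1 > 0" unfolding p_def using assms(8) by simp
      define q where "q = d0 / (2 * (C * M + 1))"
      have q0: "0 < q" unfolding q_def using d0 C0 M0 by (simp add: add_nonneg_pos)
      define \<eta> where "\<eta> = q powr (1 / (p - 1))"
      have \<eta>0: "0 < \<eta>" unfolding \<eta>_def using q0 by simp
      have "\<eta> powr (p - 1) = q" unfolding \<eta>_def using q0 p1 by (simp add: powr_powr)
      then have "C * \<eta> powr (p - 1) * M = d0 * (C * M) / (2 * (C * M + 1))" unfolding q_def by simp
      also have "\<dots> < d0"
      proof -
        have "C * M < 2 * (C * M + 1)" using C0 M0 by (smt (verit) mult_nonneg_nonneg)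
        then have "(C * M) / (2 * (C * M + 1)) < 1" using C0 M0 by (simp add: divide_less_eq add_nonneg_pos)
        then have "d0 * ((C * M) / (2 * (C * M + 1))) < d0 * 1" using d0 by (intro mult_strict_left_mono) auto
        then show ?thesis by simp
      qed
      finally show False using bound[OF \<eta>0] unfolding d0_def by simp
    qed
    then show ?thesis unfolding F_def using phi_id[of t0 "z t0"] zS ST t0' by simp
  qed

  show ?thesis using exist uniq by blast
qed
end
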